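(* Let $\mathbf L\in\mathbb R^{n\times n}$ be positive semidefinite, let $\mathcal D$, $\mathbf W$ be a dictionary and positive weights, $r\geq 1$, $\alpha>0$, and let $l_i$, $\widehat{\mathbf L}$, $\tilde s$ be as in the context. Let $t\geq 0$ and let $\sigma=(\sigma_1,\dots,\sigma_t)\in[n]^t$ be any sequence with $l_{\sigma_j}>0$ for all $j$, and define the $t\times t$ matrix $\widetilde{\mathbf L}_\sigma$ by $[\widetilde{\mathbf L}_\sigma]_{ab}=\frac{\mathbf L_{\sigma_a\sigma_b}}{r\sqrt{l_{\sigma_a}l_{\sigma_b}}}$. Then $$\frac{e^{\tilde s}\det(\mathbf I+\alpha\widetilde{\mathbf L}_\sigma)}{e^{t/r}\det(\mathbf I+\alpha\widehat{\mathbf L})}\leq 1.$$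
   Context: A dictionary is a sequence $\mathcal D=(\mathcal D_1,\dots,\mathcal D_m)$ of elements of $[n]=\{1,\dots,n\}$, with a diagonal matrix $\mathbf W\in\mathbb R^{m\times m}$ of strictly positive weights. For index sequences $A,B$, $\mathbf L_{A,B}$ denotes the submatrix with rows indexed by $A$ and columns by $B$ (with repetitions allowed). The approximate marginals are $$l_i=\alpha\Big(\mathbf L_{ii}-\alpha\,\mathbf L_{\{i\},\mathcal D}\big(\alpha\mathbf L_{\mathcal D,\mathcal D}+\mathbf W^{-1}\big)^{-1}\mathbf L_{\mathcal D,\{i\}}\Big),\qquad i\in[n].$$ Further, $\widehat{\mathbf L}=\mathbf W^{1/2}\mathbf L_{\mathcal D,\mathcal D}\mathbf W^{1/2}\in\mathbb R^{m\times m}$ and $\tilde s=d_{\mathrm{eff}}(\alpha\widehat{\mathbf L})=\mathrm{tr}\big(\alpha\widehat{\mathbf L}(\alpha\widehat{\mathbf L}+\mathbf I)^{-1}\big)$. The determinant of a $0\times0$ matrix is $1$. *)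

theory Defs
  imports "Jordan_Normal_Form.Determinant" "Jordan_Normal_Form.Gauss_Jordan_Elimination"
begin

text \<open>Matrices are Jordan_Normal_Form matrices; indices are 0-based, so [n] = {0..<n}.\<close>

definition psd_mat :: "nat \<Rightarrow> real mat \<Rightarrow> bool" where
  "psd_mat n L \<longleftrightarrow> L \<in> carrier_mat n n \<and> transpose_mat L = L \<and>
     (\<forall>x \<in> carrier_vec n. x \<bullet> (L *\<^sub>v x) \<ge> 0)"

definition subm :: "real mat \<Rightarrow> nat list \<Rightarrow> nat list \<Rightarrow> real mat" where
  "subm L A B = mat (length A) (length B) (\<lambda>(a, b). L $$ (A ! a, B ! b))"

definition minv :: "real mat \<Rightarrow> real mat" where
  "minv A = the (mat_inverse A)"

definition mtrace :: "real mat \<Rightarrow> real" where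
  "mtrace A = (\<Sum>i < dim_row A. A $$ (i, i))"

definition diagw :: "nat \<Rightarrow> (nat \<Rightarrow> real) \<Rightarrow> real mat" where
  "diagw m w = mat m m (\<lambda>(i, j). if i = j then w i else 0)"

definition approx_marg ::
  "real mat \<Rightarrow> nat list \<Rightarrow> (nat \<Rightarrow> real) \<Rightarrow> real \<Rightarrow> nat \<Rightarrow> real" where
  "approx_marg L D w \<alpha> i = \<alpha> * (L $$ (i, i) - \<alpha> *
      (subm L [i] D * minv (\<alpha> \<cdot>\<^sub>m subm L D D + diagw (length D) (\<lambda>j. 1 / w j))
        * subm L D [i]) $$ (0, 0))"

definition Lhat :: "real mat \<Rightarrow> nat list \<Rightarrow> (nat \<Rightarrow> real) \<Rightarrow> real mat" where
  "Lhat L D w = diagw (length D) (\<lambda>j. sqrt (w j)) * subm L D D * diagw (length D) (\<lambda>j. sqrt (w j))"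

definition d_eff :: "real mat \<Rightarrow> real" where
  "d_eff A = mtrace (A * minv (A + 1\<^sub>m (dim_row A)))"

definition Ltilde ::
  "real mat \<Rightarrow> nat list \<Rightarrow> (nat \<Rightarrow> real) \<Rightarrow> real \<Rightarrow> real \<Rightarrow> nat list \<Rightarrow> real mat" where
  "Ltilde L D w \<alpha> r \<sigma> = mat (length \<sigma>) (length \<sigma>) (\<lambda>(a, b).
      L $$ (\<sigma> ! a, \<sigma> ! b) /
      (r * sqrt (approx_marg L D w \<alpha> (\<sigma> ! a) * approx_marg L D w \<alpha> (\<sigma> ! b))))"

end

theory Submission
  imports Defs
begin


lemma mult_idx: "A \<in> carrier_mat nr n \<Longrightarrow> B \<in> carrier_mat n nc \<Longrightarrow> i < nr \<Longrightarrow> j < nc \<Longrightarrow>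
  (A * B) $$ (i,j) = (\<Sum>c<n. A $$ (i,c) * B $$ (c,j))"
  by (simp add: scalar_prod_def atLeast0LessThan)

definition qf :: "nat \<Rightarrow> real mat \<Rightarrow> (nat \<Rightarrow> real) \<Rightarrow> real" where
  "qf n M f = (\<Sum>i<n. \<Sum>j<n. f i * M $$ (i,j) * f j)"

lemma qf_vec: assumes "M \<in> carrier_mat n n"
  shows "qf n M f = vec n f \<bullet> (M *\<^sub>v vec n f)"
  using assms by (simp add: qf_def scalar_prod_def atLeast0LessThan sum_distrib_left mult.assoc)

lemma psd_qf: assumes "psd_mat n M" shows "qf n M f \<ge> 0"
  using assms unfolding psd_mat_def by (auto simp: qf_vec)

lemma psd_from_qf: assumes "M \<in> carrier_mat n n" "transpose_mat M = M" "\<And>f. qf n M f \<ge> 0"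
  shows "psd_mat n M"
proof -
  have "x \<bullet> (M *\<^sub>v x) \<ge> 0" if x: "x \<in> carrier_vec n" for x
  proof -
    have "x = vec n (\<lambda>i. x $ i)" using x by auto
    then show ?thesis using assms(3)[of "\<lambda>i. x $ i"] qf_vec[OF assms(1)] by metis
  qed
  then show ?thesis using assms unfolding psd_mat_def by auto
qed

lemma psd_sym: "psd_mat n M \<Longrightarrow> i < n \<Longrightarrow> j < n \<Longrightarrow> M $$ (i,j) = M $$ (j,i)"
  unfolding psd_mat_def by (metis index_transpose_mat(1) carrier_matD)

lemma psd_congr: assumes T: "psd_mat n T" and P: "P \<in> carrier_mat n k"
  shows "psd_mat k (transpose_mat P * T * P)"
proof -
  have Tc: "T \<in> carrier_mat n n" using T unfolding psd_mat_def by auto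
  have c: "transpose_mat P * T * P \<in> carrier_mat k k" using P Tc by auto
  have s: "transpose_mat (transpose_mat P * T * P) = transpose_mat P * T * P"
  proof -
    have Ts: "transpose_mat T = T" using T unfolding psd_mat_def by auto
    have "transpose_mat (transpose_mat P * T * P) = transpose_mat P * transpose_mat (transpose_mat P * T)"
      by (rule transpose_mult[of _ k n], insert P Tc, auto)
    also have "transpose_mat (transpose_mat P * T) = transpose_mat T * P"
      by (subst transpose_mult[of _ k n], insert P Tc, auto)
    finally show ?thesis using Ts P Tc by (simp add: assoc_mult_mat[of _ k n _ n _ k])
  qed
  have "x \<bullet> ((transpose_mat P * T * P) *\<^sub>v x) \<ge> 0" if x: "x \<in> carrier_vec k" for x
  proof -
    have "(transpose_mat P * T * P) *\<^sub>v x = transpose_mat P *\<^sub>v (T *\<^sub>v (P *\<^sub>v x))"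
    proof -
      have "(transpose_mat P * T * P) *\<^sub>v x = (transpose_mat P * T) *\<^sub>v (P *\<^sub>v x)"
        by (rule assoc_mult_mat_vec[of _ k n _ k], insert P Tc x, auto)
      also have "\<dots> = transpose_mat P *\<^sub>v (T *\<^sub>v (P *\<^sub>v x))"
        by (rule assoc_mult_mat_vec[of _ k n _ n], insert P Tc x, auto)
      finally show ?thesis .
    qed
    also have "x \<bullet> \<dots> = (P *\<^sub>v x) \<bullet> (T *\<^sub>v (P *\<^sub>v x))"
      using transpose_vec_mult_scalar[OF P x mult_mat_vec_carrier[OF Tc mult_mat_vec_carrier[OF P x]]]
        comm_scalar_prod[OF mult_mat_vec_carrier[OF transpose_carrier_mat[THEN iffD2, OF P] mult_mat_vec_carrier[OF Tc mult_mat_vec_carrier[OF P x]]] x]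
        comm_scalar_prod[OF mult_mat_vec_carrier[OF Tc mult_mat_vec_carrier[OF P x]] mult_mat_vec_carrier[OF P x]] by simp
    finally show ?thesis using T P x unfolding psd_mat_def by auto
  qed
  then show ?thesis using c s unfolding psd_mat_def by auto
qed



lemma qf_Suc: assumes sym: "\<And>i j. i < Suc n \<Longrightarrow> j < Suc n \<Longrightarrow> K $$ (i,j) = K $$ (j,i)"
  shows "qf (Suc n) K g = K$$(0,0) * g 0 * g 0 + 2 * g 0 * (\<Sum>j<n. K$$(0,Suc j) * g (Suc j))
     + (\<Sum>i<n. \<Sum>j<n. g (Suc i) * K$$(Suc i, Suc j) * g (Suc j))"
proof -
  have "qf (Suc n) K g = g 0 * K$$(0,0) * g 0 + (\<Sum>j<n. g 0 * K$$(0,Suc j) * g (Suc j))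
     + ((\<Sum>i<n. g (Suc i) * K$$(Suc i,0) * g 0) + (\<Sum>i<n. \<Sum>j<n. g (Suc i) * K$$(Suc i,Suc j) * g (Suc j)))"
    unfolding qf_def sum.lessThan_Suc_shift by (simp add: sum.distrib del: sum.lessThan_Suc)
  also have "(\<Sum>i<n. g (Suc i) * K$$(Suc i,0) * g 0) = (\<Sum>j<n. g 0 * K$$(0,Suc j) * g (Suc j))"
    using sym by (intro sum.cong) auto
  finally show ?thesis by (simp add: sum_distrib_left algebra_simps)
qed

lemma tmult_idx: "Z \<in> carrier_mat n k \<Longrightarrow> i < k \<Longrightarrow> j < k \<Longrightarrow>
  (transpose_mat Z * Z) $$ (i,j) = (\<Sum>c<n. Z $$ (c,i) * Z $$ (c,j))"
  by (simp add: scalar_prod_def atLeast0LessThan)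

lemma cholesky: "psd_mat n K \<Longrightarrow> \<exists>Z\<in>carrier_mat n n. upper_triangular Z \<and> K = transpose_mat Z * Z"
proof (induction n arbitrary: K)
  case 0
  then have "K \<in> carrier_mat 0 0" unfolding psd_mat_def by auto
  then show ?case by (intro bexI[of _ "0\<^sub>m 0 0"]) (auto simp: upper_triangular_def)
next
  case (Suc n)
  have Kc: "K \<in> carrier_mat (Suc n) (Suc n)" using Suc.prems unfolding psd_mat_def by auto
  have sym: "\<And>i j. i < Suc n \<Longrightarrow> j < Suc n \<Longrightarrow> K $$ (i,j) = K $$ (j,i)"
    using psd_sym[OF Suc.prems] by auto
  define a where "a = K$$(0,0)"
  define b where "b = (\<lambda>j. K$$(0, Suc j))"
  define B where "B = (\<lambda>f. (\<Sum>j<n. b j * f j))"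
  define Q where "Q = (\<lambda>f. (\<Sum>i<n. \<Sum>j<n. f i * K$$(Suc i, Suc j) * f j))"
  have qfK: "qf (Suc n) K g = a * g 0 * g 0 + 2 * g 0 * B (\<lambda>j. g (Suc j)) + Q (\<lambda>j. g (Suc j))" for g
    unfolding a_def B_def b_def Q_def using qf_Suc[OF sym] by auto
  have pos: "a * s * s + 2 * s * B f + Q f \<ge> 0" for s f
    using qfK[of "\<lambda>i. if i = 0 then s else f (i - 1)"] psd_qf[OF Suc.prems, of "\<lambda>i. if i = 0 then s else f (i - 1)"] by simp
  have a0: "a \<ge> 0" using pos[of 1 "\<lambda>_. 0"] by (simp add: B_def Q_def)
  have b0: "b j = 0" if "a = 0" "j < n" for j
  proof -
    have "B f = 0" for f
    proof (rule ccontr)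
      assume ne: "B f \<noteq> 0"
      have "a * (-(Q f + 1)/(2 * B f)) * (-(Q f + 1)/(2 * B f)) + 2 * (-(Q f + 1)/(2 * B f)) * B f + Q f = -1"
        using ne \<open>a = 0\<close> by (simp add: field_simps)
      with pos[of "-(Q f + 1)/(2 * B f)" f] show False by linarith
    qed
    from this[of "\<lambda>i. if i = j then 1 else 0"] show ?thesis using \<open>j < n\<close>
      by (simp add: B_def if_distrib cong: if_cong)
  qed
  define K' where "K' = mat n n (\<lambda>(i,j). K$$(Suc i, Suc j) - (if a > 0 then b i * b j / a else 0))"
  have K'c: "K' \<in> carrier_mat n n" unfolding K'_def by auto
  have K'sym: "transpose_mat K' = K'"
    unfolding K'_def by (rule eq_matI) (auto simp: sym mult.commute)
  have qfK': "qf n K' f = Q f - (if a > 0 then B f * B f / a else 0)" for f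
  proof -
    have "qf n K' f = (\<Sum>i<n. \<Sum>j<n. f i * K$$(Suc i, Suc j) * f j - f i * (if a > 0 then b i * b j / a else 0) * f j)"
      unfolding qf_def K'_def by (intro sum.cong refl) (auto simp: algebra_simps)
    also have "\<dots> = Q f - (\<Sum>i<n. \<Sum>j<n. f i * (if a > 0 then b i * b j / a else 0) * f j)"
      unfolding Q_def by (simp add: sum_subtractf)
    also have "(\<Sum>i<n. \<Sum>j<n. f i * (if a > 0 then b i * b j / a else 0) * f j) = (if a > 0 then B f * B f / a else 0)"
      unfolding B_def by (auto simp: sum_distrib_left sum_distrib_right sum_divide_distrib algebra_simps)
    finally show ?thesis .
  qed
  have K'psd: "psd_mat n K'"
  proof (rule psd_from_qf[OF K'c K'sym])
    fix f
    show "qf n K' f \<ge> 0"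
    proof (cases "a > 0")
      case True
      have "a * (- B f / a) * (- B f / a) + 2 * (- B f / a) * B f + Q f = Q f - B f * B f / a"
        using True by (simp add: field_simps power2_eq_square)
      then show ?thesis using pos[of "- B f / a" f] True qfK' by simp
    next
      case False
      then show ?thesis using pos[of 0 f] qfK' by simp
    qed
  qed
  from Suc.IH[OF K'psd] obtain Z' where Z'c: "Z' \<in> carrier_mat n n" and Z'ut: "upper_triangular Z'"
    and Z'K: "K' = transpose_mat Z' * Z'" by auto
  define Z where "Z = mat (Suc n) (Suc n) (\<lambda>(i,j). if i = 0 then (if j = 0 then sqrt a else
     (if a > 0 then b (j - 1) / sqrt a else 0)) else if j = 0 then 0 else Z' $$ (i - 1, j - 1))"
  have Zc: "Z \<in> carrier_mat (Suc n) (Suc n)" unfolding Z_def by auto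
  have Zut: "upper_triangular Z"
    unfolding upper_triangular_def Z_def using Z'ut Z'c by (auto simp: upper_triangular_def)
  have K'idx: "K' $$ (i,j) = (\<Sum>c<n. Z' $$ (c,i) * Z' $$ (c,j))" if "i < n" "j < n" for i j
    unfolding Z'K by (rule tmult_idx[OF Z'c that])
  have "K = transpose_mat Z * Z"
  proof (rule eq_matI)
    fix i j assume ij: "i < dim_row (transpose_mat Z * Z)" "j < dim_col (transpose_mat Z * Z)"
    then have i: "i < Suc n" and j: "j < Suc n" using Zc by auto
    have "(transpose_mat Z * Z) $$ (i,j) = (\<Sum>c<Suc n. Z $$ (c,i) * Z $$ (c,j))"
      by (rule tmult_idx[OF Zc i j])
    also have "\<dots> = Z $$ (0,i) * Z $$ (0,j) + (\<Sum>c<n. Z $$ (Suc c,i) * Z $$ (Suc c,j))"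
      by (simp only: sum.lessThan_Suc_shift)
    also have "\<dots> = K $$ (i,j)"
    proof (cases i)
      case 0
      then show ?thesis
      proof (cases j)
        case 0
        then show ?thesis using \<open>i = 0\<close> a0 by (simp add: Z_def a_def)
      next
        case (Suc j')
        then show ?thesis using \<open>i = 0\<close> a0 j b0[of j'] by (auto simp: Z_def b_def)
      qed
    next
      case (Suc i')
      then show ?thesis
      proof (cases j)
        case 0
        then show ?thesis using \<open>i = Suc i'\<close> a0 i b0[of i'] sym[of 0 i] by (auto simp: Z_def b_def)
      next
        case (Suc j')
        have "(\<Sum>c<n. Z $$ (Suc c,i) * Z $$ (Suc c,j)) = K' $$ (i',j')"
          using K'idx[of i' j'] \<open>i = Suc i'\<close> \<open>j = Suc j'\<close> i j by (simp add: Z_def)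
        then show ?thesis using \<open>i = Suc i'\<close> \<open>j = Suc j'\<close> i j a0
          by (auto simp: Z_def K'_def b_def)
      qed
    qed
    finally show "K $$ (i,j) = (transpose_mat Z * Z) $$ (i,j)" by simp
  qed (use Kc Zc in auto)
  then show ?case using Zc Zut by auto
qed



lemma mtrace_comm: assumes "A \<in> carrier_mat n k" "B \<in> carrier_mat k n"
  shows "mtrace (A * B) = mtrace (B * A)"
proof -
  have d1: "dim_row (A * B) = n" "dim_row (B * A) = k" using assms by auto
  have "mtrace (A * B) = (\<Sum>i<n. \<Sum>c<k. A $$ (i,c) * B $$ (c,i))"
    unfolding mtrace_def d1 using assms by (intro sum.cong refl, subst mult_idx[of _ n k]) auto
  also have "\<dots> = (\<Sum>c<k. \<Sum>i<n. B $$ (c,i) * A $$ (i,c))"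
    by (subst sum.swap) (simp add: mult.commute)
  also have "\<dots> = mtrace (B * A)"
    unfolding mtrace_def d1 using assms by (intro sum.cong refl, subst mult_idx[of _ k n]) auto
  finally show ?thesis .
qed

lemma hadamard: assumes "psd_mat n T"
  shows "det T \<le> (\<Prod>i<n. T $$ (i,i))" "\<And>i. i < n \<Longrightarrow> T $$ (i,i) \<ge> 0"
proof -
  obtain Z where Zc: "Z \<in> carrier_mat n n" and ut: "upper_triangular Z" and TZ: "T = transpose_mat Z * Z"
    using cholesky[OF assms] by auto
  have Tii: "T $$ (i,i) = (\<Sum>c<n. Z $$ (c,i) * Z $$ (c,i))" if "i < n" for i
    unfolding TZ by (rule tmult_idx[OF Zc that that])
  have le: "Z $$ (i,i) * Z $$ (i,i) \<le> T $$ (i,i)" if "i < n" for i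
    unfolding Tii[OF that] by (rule member_le_sum[of i "{..<n}" "\<lambda>c. Z $$ (c,i) * Z $$ (c,i)", simplified])
      (use that in auto)
  show "\<And>i. i < n \<Longrightarrow> T $$ (i,i) \<ge> 0" using le by (meson zero_le_square order_trans) 
  have dZ: "det Z = (\<Prod>i<n. Z $$ (i,i))"
    using det_upper_triangular[OF ut Zc] prod_list_diag_prod[of Z] Zc by (simp add: atLeast0LessThan)
  have "det T = det Z * det Z"
    unfolding TZ using Zc by (simp add: det_mult[of _ n] det_transpose)
  also have "\<dots> = (\<Prod>i<n. Z $$ (i,i) * Z $$ (i,i))" by (simp add: dZ prod.distrib)
  also have "\<dots> \<le> (\<Prod>i<n. T $$ (i,i))"
    by (rule prod_mono) (use le in auto)
  finally show "det T \<le> (\<Prod>i<n. T $$ (i,i))" .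
qed

lemma det_le_exp_trace: assumes "psd_mat n T"
  shows "det T \<le> exp (mtrace T - real n)"
proof -
  have Tc: "T \<in> carrier_mat n n" using assms unfolding psd_mat_def by auto
  have "det T \<le> (\<Prod>i<n. T $$ (i,i))" by (rule hadamard(1)[OF assms])
  also have "\<dots> \<le> (\<Prod>i<n. exp (T $$ (i,i) - 1))"
  proof (rule prod_mono)
    fix i assume "i \<in> {..<n}"
    then show "0 \<le> T $$ (i,i) \<and> T $$ (i,i) \<le> exp (T $$ (i,i) - 1)"
      using hadamard(2)[OF assms, of i] exp_ge_add_one_self[of "T $$ (i,i) - 1"] by auto
  qed
  also have "\<dots> = exp (\<Sum>i<n. T $$ (i,i) - 1)" by (simp add: exp_sum)
  also have "(\<Sum>i<n. T $$ (i,i) - 1) = mtrace T - real n"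
    unfolding mtrace_def using Tc by (simp add: sum_subtractf)
  finally show ?thesis .
qed

lemma gen_hadamard: assumes S: "psd_mat n S" and T: "psd_mat n T"
  and Si: "Si \<in> carrier_mat n n" and SSi: "S * Si = 1\<^sub>m n"
shows "det T \<le> det S * exp (mtrace (Si * T) - real n)" "det S > 0"
proof -
  have Sc: "S \<in> carrier_mat n n" and Ss: "transpose_mat S = S" using S unfolding psd_mat_def by auto
  have Tc: "T \<in> carrier_mat n n" using T unfolding psd_mat_def by auto
  obtain Y where Yc: "Y \<in> carrier_mat n n" and SY: "S = transpose_mat Y * Y"
    using cholesky[OF S] by auto
  have SiS: "Si * S = 1\<^sub>m n" by (rule mat_mult_left_right_inverse[OF Sc Si SSi])
  have dS: "det S = det Y * det Y" unfolding SY using Yc by (simp add: det_mult[of _ n] det_transpose)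
  have "det S * det Si = 1" using det_mult[OF Sc Si] SSi by simp
  then have "det S \<noteq> 0" by auto
  then have dY: "det Y \<noteq> 0" using dS by auto
  then show "det S > 0" using dS not_real_square_gt_zero by metis
  define Yi where "Yi = Si * transpose_mat Y"
  have Yic: "Yi \<in> carrier_mat n n" unfolding Yi_def using Si Yc by auto
  have YiY: "Yi * Y = 1\<^sub>m n"
    unfolding Yi_def using Si Yc SiS SY by (simp add: assoc_mult_mat[of _ n n _ n _ n])
  have YYi: "Y * Yi = 1\<^sub>m n" by (rule mat_mult_left_right_inverse[OF Yic Yc YiY])
  have Sis: "transpose_mat Si = Si"
  proof -
    have "transpose_mat Si * S = 1\<^sub>m n"
      using transpose_mult[OF Sc Si] SSi Ss by simp
    have "transpose_mat Si = transpose_mat Si * (S * Si)"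
      using Si SSi by simp
    also have "\<dots> = (transpose_mat Si * S) * Si" using Si Sc by (simp add: assoc_mult_mat[of _ n n _ n _ n])
    also have "\<dots> = Si" using Si \<open>transpose_mat Si * S = 1\<^sub>m n\<close> by simp
    finally show ?thesis .
  qed
  have YiYit: "Yi * transpose_mat Yi = Si"
  proof -
    have "transpose_mat Yi = Y * transpose_mat Si"
      unfolding Yi_def using transpose_mult[OF Si transpose_carrier_mat[THEN iffD2, OF Yc]] by simp
    then have "Yi * transpose_mat Yi = Si * (transpose_mat Y * Y) * transpose_mat Si"
      unfolding Yi_def using Si Yc by (simp add: assoc_mult_mat[of _ n n _ n _ n])
    also have "\<dots> = Si" using SY SiS Sis Si by simp
    finally show ?thesis .
  qed
  define T' where "T' = transpose_mat Yi * T * Yi"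
  have T'psd: "psd_mat n T'" unfolding T'_def by (rule psd_congr[OF T Yic])
  have dYi: "det Yi * det Y = 1" using det_mult[OF Yic Yc] YiY by simp
  have "det T' = det Yi * det T * det Yi"
    unfolding T'_def using Yic Tc by (simp add: det_mult[of _ n] det_transpose)
  then have dT: "det T = det T' * det S"
    using dYi dS by (simp add: algebra_simps)
  have trT': "mtrace T' = mtrace (Si * T)"
  proof -
    have "mtrace T' = mtrace (Yi * (transpose_mat Yi * T))"
      unfolding T'_def by (rule mtrace_comm[of _ n n]) (use Yic Tc in auto)
    also have "Yi * (transpose_mat Yi * T) = Si * T"
      using Yic Tc YiYit by (simp add: assoc_mult_mat[of _ n n _ n _ n, symmetric])
    finally show ?thesis .
  qed
  have "det T' \<le> exp (mtrace (Si * T) - real n)" using det_le_exp_trace[OF T'psd] trT' by simp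
  then show "det T \<le> det S * exp (mtrace (Si * T) - real n)"
    using dT \<open>det S > 0\<close> by (simp add: mult.commute)
qed



lemma sylvester: assumes X: "(X :: real mat) \<in> carrier_mat k m"
  shows "det (1\<^sub>m k + X * transpose_mat X) = det (1\<^sub>m m + transpose_mat X * X)"
proof -
  have Xt: "transpose_mat X \<in> carrier_mat m k" using X by auto
  define M where "M = four_block_mat (1\<^sub>m k) (- X) (transpose_mat X) (1\<^sub>m m)"
  define P1 where "P1 = four_block_mat (1\<^sub>m k) (0\<^sub>m k m) (transpose_mat X) (1\<^sub>m m)"
  define P2 where "P2 = four_block_mat (1\<^sub>m k) (- X) (0\<^sub>m m k) (1\<^sub>m m + transpose_mat X * X)"
  define P3 where "P3 = four_block_mat (1\<^sub>m k + X * transpose_mat X) (- X) (0\<^sub>m m k) (1\<^sub>m m)"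
  have c: "P1 \<in> carrier_mat (k+m) (k+m)" "P2 \<in> carrier_mat (k+m) (k+m)" "P3 \<in> carrier_mat (k+m) (k+m)"
    unfolding P1_def P2_def P3_def using X by auto
  have e1: "transpose_mat X * - X + 1\<^sub>m m * (1\<^sub>m m + transpose_mat X * X) = 1\<^sub>m m"
    by (rule eq_matI) (use X in auto)
  have "P1 * P2 = four_block_mat (1\<^sub>m k * 1\<^sub>m k + 0\<^sub>m k m * 0\<^sub>m m k)
      (1\<^sub>m k * - X + 0\<^sub>m k m * (1\<^sub>m m + transpose_mat X * X))
      (transpose_mat X * 1\<^sub>m k + 1\<^sub>m m * 0\<^sub>m m k)
      (transpose_mat X * - X + 1\<^sub>m m * (1\<^sub>m m + transpose_mat X * X))"
    unfolding P1_def P2_def by (rule mult_four_block_mat) (use X in auto)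
  also have "\<dots> = M" unfolding M_def e1 using X by simp
  finally have M1: "M = P1 * P2" ..
  have e2: "(1\<^sub>m k + X * transpose_mat X) * 1\<^sub>m k + - X * transpose_mat X = 1\<^sub>m k"
    by (rule eq_matI) (use X in auto)
  have "P3 * P1 = four_block_mat ((1\<^sub>m k + X * transpose_mat X) * 1\<^sub>m k + - X * transpose_mat X)
      ((1\<^sub>m k + X * transpose_mat X) * 0\<^sub>m k m + - X * 1\<^sub>m m)
      (0\<^sub>m m k * 1\<^sub>m k + 1\<^sub>m m * transpose_mat X)
      (0\<^sub>m m k * 0\<^sub>m k m + 1\<^sub>m m * 1\<^sub>m m)"
    unfolding P1_def P3_def by (rule mult_four_block_mat) (use X in auto)
  also have "\<dots> = M" unfolding M_def e2 using X by simp
  finally have M2: "M = P3 * P1" ..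
  have d1: "det P1 = 1" unfolding P1_def
    by (subst det_four_block_mat_upper_right_zero[of _ k _ m]) (use X in auto)
  have d2: "det P2 = det (1\<^sub>m m + transpose_mat X * X)" unfolding P2_def
    by (subst det_four_block_mat_lower_left_zero[of _ k _ m]) (use X in auto)
  have d3: "det P3 = det (1\<^sub>m k + X * transpose_mat X)" unfolding P3_def
    by (subst det_four_block_mat_lower_left_zero[of _ k _ m]) (use X in auto)
  have "det M = det (1\<^sub>m m + transpose_mat X * X)" using M1 det_mult[OF c(1) c(2)] d1 d2 by simp
  moreover have "det M = det (1\<^sub>m k + X * transpose_mat X)" using M2 det_mult[OF c(3) c(1)] d1 d3 by simp
  ultimately show ?thesis by simp
qed



lemma sprod_self_nonneg: "0 \<le> (v :: real vec) \<bullet> v"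
  unfolding scalar_prod_def by (rule sum_nonneg) auto

lemma psd_one_plus: assumes X: "(X :: real mat) \<in> carrier_mat k m"
  shows "psd_mat k (1\<^sub>m k + X * transpose_mat X)"
proof -
  have c: "1\<^sub>m k + X * transpose_mat X \<in> carrier_mat k k" using X by auto
  have s: "transpose_mat (1\<^sub>m k + X * transpose_mat X) = 1\<^sub>m k + X * transpose_mat X"
    by (rule eq_matI) (use X in \<open>auto simp: comm_scalar_prod[of _ m]\<close>)
  have "x \<bullet> ((1\<^sub>m k + X * transpose_mat X) *\<^sub>v x) \<ge> 0" if x: "x \<in> carrier_vec k" for x
  proof -
    have "(1\<^sub>m k + X * transpose_mat X) *\<^sub>v x = x + X *\<^sub>v (transpose_mat X *\<^sub>v x)"
      using X x by (simp add: add_mult_distrib_mat_vec[of _ k k] assoc_mult_mat_vec[of _ k m _ k])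
    then have "x \<bullet> ((1\<^sub>m k + X * transpose_mat X) *\<^sub>v x) = x \<bullet> x + (transpose_mat X *\<^sub>v x) \<bullet> (transpose_mat X *\<^sub>v x)"
      using X x by (simp add: scalar_prod_add_distrib[of _ k] transpose_vec_mult_scalar[of _ k m])
    then show ?thesis using sprod_self_nonneg[of x] sprod_self_nonneg[of "transpose_mat X *\<^sub>v x"] by simp
  qed
  then show ?thesis using c s unfolding psd_mat_def by auto
qed

lemma mtrace_add: "A \<in> carrier_mat n n \<Longrightarrow> B \<in> carrier_mat n n \<Longrightarrow> mtrace (A + B) = mtrace A + mtrace B"
  unfolding mtrace_def by (simp add: sum.distrib)

lemma mtrace_minus: "A \<in> carrier_mat n n \<Longrightarrow> B \<in> carrier_mat n n \<Longrightarrow> mtrace (A - B) = mtrace A - mtrace B"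
  unfolding mtrace_def by (simp add: sum_subtractf)

lemma mtrace_one: "mtrace (1\<^sub>m n) = real n"
  unfolding mtrace_def by simp

lemma core: assumes X: "X \<in> carrier_mat k m" and V: "V \<in> carrier_mat k t"
  and Gi: "Gi \<in> carrier_mat m m" and GGi: "(1\<^sub>m m + transpose_mat X * X) * Gi = 1\<^sub>m m"
shows "det (1\<^sub>m t + transpose_mat V * V) \<le> det (1\<^sub>m m + transpose_mat X * X) *
   exp (mtrace (transpose_mat V * (1\<^sub>m k - X * Gi * transpose_mat X) * V) - mtrace (transpose_mat X * X * Gi))"
  "det (1\<^sub>m m + transpose_mat X * X) > 0"
proof -
  define S where "S = 1\<^sub>m k + X * transpose_mat X"
  define Si where "Si = 1\<^sub>m k - X * Gi * transpose_mat X"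
  define T where "T = 1\<^sub>m k + V * transpose_mat V"
  have Xt: "transpose_mat X \<in> carrier_mat m k" using X by auto
  have Sc: "S \<in> carrier_mat k k" and Sic: "Si \<in> carrier_mat k k" and Tc: "T \<in> carrier_mat k k"
    unfolding S_def Si_def T_def using X V Gi by auto
  have SX: "S * X = X * (1\<^sub>m m + transpose_mat X * X)"
  proof -
    have "S * X = 1\<^sub>m k * X + X * transpose_mat X * X"
      unfolding S_def by (rule add_mult_distrib_mat[of _ k k]) (use X in auto)
    also have "\<dots> = X + X * (transpose_mat X * X)" using X by simp
    also have "\<dots> = X * 1\<^sub>m m + X * (transpose_mat X * X)" using X by simp
    also have "\<dots> = X * (1\<^sub>m m + transpose_mat X * X)"
      by (rule mult_add_distrib_mat[of _ k m, symmetric]) (use X in auto)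
    finally show ?thesis .
  qed
  have SSi: "S * Si = 1\<^sub>m k"
  proof -
    have "S * Si = S * 1\<^sub>m k - S * (X * Gi * transpose_mat X)"
      unfolding Si_def by (rule mult_minus_distrib_mat[of _ k k]) (use Sc X Gi in auto)
    also have "S * (X * Gi * transpose_mat X) = (S * X) * Gi * transpose_mat X"
    proof -
      have c1: "X * Gi \<in> carrier_mat k m" "Gi * transpose_mat X \<in> carrier_mat m k" "S * X \<in> carrier_mat k m"
        using X Gi Sc by auto
      have "S * (X * Gi * transpose_mat X) = S * (X * Gi) * transpose_mat X"
        by (rule assoc_mult_mat[symmetric, of S k k "X * Gi" m "transpose_mat X" k]) (use Sc X Gi c1 in auto)
      also have "S * (X * Gi) = S * X * Gi"
        by (rule assoc_mult_mat[symmetric, of S k k X m Gi m]) (use Sc X Gi c1 in auto)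
      finally show ?thesis .
    qed
    also have "\<dots> = X * ((1\<^sub>m m + transpose_mat X * X) * Gi) * transpose_mat X"
      unfolding SX using X Gi by (simp add: assoc_mult_mat[of _ k m _ m _ m])
    also have "\<dots> = X * transpose_mat X" unfolding GGi using X by simp
    also have "S * 1\<^sub>m k - X * transpose_mat X = 1\<^sub>m k"
      unfolding S_def by (rule eq_matI) (use X in auto)
    finally show ?thesis .
  qed
  have Spsd: "psd_mat k S" unfolding S_def by (rule psd_one_plus[OF X])
  have Tpsd: "psd_mat k T" unfolding T_def by (rule psd_one_plus[OF V])
  note gh = gen_hadamard[OF Spsd Tpsd Sic SSi]
  have dS: "det S = det (1\<^sub>m m + transpose_mat X * X)" unfolding S_def by (rule sylvester[OF X])
  have dT: "det T = det (1\<^sub>m t + transpose_mat V * V)" unfolding T_def by (rule sylvester[OF V])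
  show "det (1\<^sub>m m + transpose_mat X * X) > 0" using gh(2) dS by simp
  have tr1: "mtrace (Si * T) = mtrace Si + mtrace (Si * V * transpose_mat V)"
  proof -
    have "Si * T = Si * 1\<^sub>m k + Si * (V * transpose_mat V)"
      unfolding T_def by (rule mult_add_distrib_mat[of _ k k]) (use Sic V in auto)
    also have "\<dots> = Si + Si * V * transpose_mat V" using Sic V by (simp add: assoc_mult_mat[of _ k k _ t _ k])
    finally show ?thesis using Sic V by (simp add: mtrace_add[of _ k])
  qed
  have tr2: "mtrace (Si * V * transpose_mat V) = mtrace (transpose_mat V * (1\<^sub>m k - X * Gi * transpose_mat X) * V)"
  proof -
    have "mtrace (Si * V * transpose_mat V) = mtrace (transpose_mat V * (Si * V))"
      by (rule mtrace_comm[of _ k t]) (use Sic V in auto)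
    also have "transpose_mat V * (Si * V) = transpose_mat V * Si * V"
      using Sic V by (simp add: assoc_mult_mat[of _ t k _ k _ t])
    finally show ?thesis unfolding Si_def .
  qed
  have tr3: "mtrace Si = real k - mtrace (transpose_mat X * X * Gi)"
  proof -
    have "mtrace Si = real k - mtrace (X * Gi * transpose_mat X)"
      unfolding Si_def using X Gi by (simp add: mtrace_minus[of _ k] mtrace_one)
    also have "mtrace (X * Gi * transpose_mat X) = mtrace (transpose_mat X * (X * Gi))"
      by (rule mtrace_comm[of _ k m]) (use X Gi in auto)
    also have "transpose_mat X * (X * Gi) = transpose_mat X * X * Gi"
      using X Gi by (simp add: assoc_mult_mat[of _ m k _ m _ m])
    finally show ?thesis .
  qed
  show "det (1\<^sub>m t + transpose_mat V * V) \<le> det (1\<^sub>m m + transpose_mat X * X) *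
   exp (mtrace (transpose_mat V * (1\<^sub>m k - X * Gi * transpose_mat X) * V) - mtrace (transpose_mat X * X * Gi))"
    using gh(1) dS dT tr1 tr2 tr3 by (simp add: algebra_simps)
qed



lemma minv_props: assumes A: "A \<in> carrier_mat n n" and d: "det A \<noteq> 0"
  shows "minv A \<in> carrier_mat n n" "A * minv A = 1\<^sub>m n" "minv A * A = 1\<^sub>m n"
proof -
  have "mat_inverse A \<noteq> None"
    using mat_inverse(1)[OF A, of undefined] det_non_zero_imp_unit[OF A d, of undefined] by auto
  then obtain B where B: "mat_inverse A = Some B" by auto
  from mat_inverse(2)[OF A B] have "A * B = 1\<^sub>m n \<and> B * A = 1\<^sub>m n \<and> B \<in> carrier_mat n n" .
  then show "minv A \<in> carrier_mat n n" "A * minv A = 1\<^sub>m n" "minv A * A = 1\<^sub>m n"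
    unfolding minv_def B by auto
qed

lemma minv_unique: assumes A: "A \<in> carrier_mat n n" and B: "B \<in> carrier_mat n n" and AB: "A * B = 1\<^sub>m n"
  shows "minv A = B"
proof -
  have "det A * det B = 1" using det_mult[OF A B] AB by simp
  then have d: "det A \<noteq> 0" by auto
  note p = minv_props[OF A d]
  have "B = (minv A * A) * B" using p B by simp
  also have "\<dots> = minv A * (A * B)" by (rule assoc_mult_mat) (use p A B in auto)
  also have "\<dots> = minv A" using AB p by simp
  finally show ?thesis by simp
qed

lemma one_plus_det: assumes X: "(X :: real mat) \<in> carrier_mat k m"
  shows "det (1\<^sub>m m + transpose_mat X * X) \<noteq> 0"
proof
  let ?M = "1\<^sub>m m + transpose_mat X * X"
  have Mc: "?M \<in> carrier_mat m m" using X by auto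
  assume "det ?M = 0"
  then obtain v where v: "v \<in> carrier_vec m" "v \<noteq> 0\<^sub>v m" "?M *\<^sub>v v = 0\<^sub>v m"
    using det_0_iff_vec_prod_zero_field[OF Mc] by auto
  have Xt: "transpose_mat X \<in> carrier_mat m k" using X by auto
  have "?M *\<^sub>v v = v + transpose_mat X *\<^sub>v (X *\<^sub>v v)"
    using X v by (simp add: add_mult_distrib_mat_vec[of _ m m] assoc_mult_mat_vec[of _ m k _ m])
  then have "v \<bullet> (?M *\<^sub>v v) = v \<bullet> v + (X *\<^sub>v v) \<bullet> (X *\<^sub>v v)"
    using X v transpose_vec_mult_scalar[OF X v(1) mult_mat_vec_carrier[OF X v(1)]]
      comm_scalar_prod[of v m "transpose_mat X *\<^sub>v (X *\<^sub>v v)"]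
    by (simp add: scalar_prod_add_distrib[of _ m])
  then have "v \<bullet> v + (X *\<^sub>v v) \<bullet> (X *\<^sub>v v) = 0" using v by simp
  then have vv: "v \<bullet> v = 0" using sprod_self_nonneg[of v] sprod_self_nonneg[of "X *\<^sub>v v"] by linarith
  have "\<forall>i\<in>{0..<m}. v $ i * v $ i = 0"
    using vv v(1) unfolding scalar_prod_def by (subst (asm) sum_nonneg_eq_0_iff) auto
  then have "v = 0\<^sub>v m" using v(1) by (intro eq_vecI) auto
  then show False using v(2) by simp
qed

lemma diag_left: assumes "A \<in> carrier_mat m n2" "i < m" "j < n2"
  shows "(diagw m f * A) $$ (i,j) = f i * A $$ (i,j)"
proof -
  have "(diagw m f * A) $$ (i,j) = (\<Sum>c<m. (if i = c then f i else 0) * A $$ (c,j))"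
    using assms by (subst mult_idx[of _ m m]) (auto simp: diagw_def intro!: sum.cong)
  also have "\<dots> = (\<Sum>c<m. if c = i then f i * A $$ (c,j) else 0)" by (intro sum.cong) auto
  also have "\<dots> = f i * A $$ (i,j)" using assms by simp
  finally show ?thesis .
qed

lemma diag_right: assumes "A \<in> carrier_mat n1 m" "i < n1" "j < m"
  shows "(A * diagw m f) $$ (i,j) = A $$ (i,j) * f j"
proof -
  have "(A * diagw m f) $$ (i,j) = (\<Sum>c<m. A $$ (i,c) * (if c = j then f j else 0))"
    using assms by (subst mult_idx[of _ n1 m]) (auto simp: diagw_def intro!: sum.cong)
  also have "\<dots> = (\<Sum>c<m. if c = j then A $$ (i,c) * f j else 0)" by (intro sum.cong) auto
  also have "\<dots> = A $$ (i,j) * f j" using assms by simp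
  finally show ?thesis .
qed

lemma diagw_carrier[simp]: "diagw m f \<in> carrier_mat m m" unfolding diagw_def by auto

lemma subm_carrier[simp]: "subm L A B \<in> carrier_mat (length A) (length B)" unfolding subm_def by auto

lemma subm_idx[simp]: "i < length A \<Longrightarrow> j < length B \<Longrightarrow> subm L A B $$ (i,j) = L $$ (A ! i, B ! j)"
  unfolding subm_def by auto

lemma Lhat_carrier: "Lhat L D w \<in> carrier_mat (length D) (length D)"
  unfolding Lhat_def by (intro mult_carrier_mat[of _ _ "length D"] diagw_carrier subm_carrier)

lemma Lhat_idx: assumes "i < length D" "j < length D"
  shows "Lhat L D w $$ (i,j) = sqrt (w i) * L $$ (D ! i, D ! j) * sqrt (w j)"
proof -
  let ?m = "length D"
  have c: "diagw ?m (\<lambda>j. sqrt (w j)) * subm L D D \<in> carrier_mat ?m ?m"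
    by (intro mult_carrier_mat[of _ _ "length D"] diagw_carrier subm_carrier)
  show ?thesis unfolding Lhat_def using assms
    by (simp add: diag_right[OF c] diag_left[of _ ?m ?m])
qed



lemma trip_idx: assumes "A \<in> carrier_mat n1 n2" "B \<in> carrier_mat n2 n3" "C \<in> carrier_mat n3 n4"
  "i < n1" "j < n4"
  shows "(A * B * C) $$ (i,j) = (\<Sum>q<n3. (\<Sum>p<n2. A $$ (i,p) * B $$ (p,q)) * C $$ (q,j))"
proof -
  have "(A * B * C) $$ (i,j) = (\<Sum>q<n3. (A * B) $$ (i,q) * C $$ (q,j))"
    by (rule mult_idx[of _ n1 n3]) (use assms in auto)
  also have "\<dots> = (\<Sum>q<n3. (\<Sum>p<n2. A $$ (i,p) * B $$ (p,q)) * C $$ (q,j))"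
    by (intro sum.cong refl, subst mult_idx[of _ n1 n2]) (use assms in auto)
  finally show ?thesis .
qed

lemma sandwich: assumes V: "V \<in> carrier_mat k t" and X: "X \<in> carrier_mat k m" and G: "G \<in> carrier_mat m m"
  shows "transpose_mat V * (1\<^sub>m k - X * G * transpose_mat X) * (V :: real mat)
     = transpose_mat V * V - (transpose_mat V * X) * G * (transpose_mat X * V)"
proof -
  have Vt: "transpose_mat V \<in> carrier_mat t k" and Xt: "transpose_mat X \<in> carrier_mat m k" using V X by auto
  have c1: "X * G \<in> carrier_mat k m" "X * G * transpose_mat X \<in> carrier_mat k k" using X G by auto
  have e1: "transpose_mat V * (1\<^sub>m k - X * G * transpose_mat X) = transpose_mat V * 1\<^sub>m k - transpose_mat V * (X * G * transpose_mat X)"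
    by (rule mult_minus_distrib_mat[of _ t k]) (use Vt c1 in auto)
  have c2: "transpose_mat V * (X * G * transpose_mat X) \<in> carrier_mat t k" using Vt c1 by auto
  have e2: "(transpose_mat V - transpose_mat V * (X * G * transpose_mat X)) * V = transpose_mat V * V - transpose_mat V * (X * G * transpose_mat X) * V"
    by (rule minus_mult_distrib_mat[of _ t k]) (use Vt c2 V in auto)
  have a1: "transpose_mat V * (X * G * transpose_mat X) * V = transpose_mat V * ((X * G * transpose_mat X) * V)"
    by (rule assoc_mult_mat[of _ t k _ k _ t]) (use Vt c1 V in auto)
  have a2: "(X * G * transpose_mat X) * V = (X * G) * (transpose_mat X * V)"
    by (rule assoc_mult_mat[of _ k m _ k _ t]) (use c1 Xt V in auto)
  have a3: "transpose_mat V * ((X * G) * (transpose_mat X * V)) = (transpose_mat V * (X * G)) * (transpose_mat X * V)"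
    by (rule assoc_mult_mat[symmetric, of _ t k _ m _ t]) (use Vt c1 Xt V in auto)
  have a4: "transpose_mat V * (X * G) = (transpose_mat V * X) * G"
    by (rule assoc_mult_mat[symmetric, of _ t k _ m _ m]) (use Vt X G in auto)
  have r1: "transpose_mat V * 1\<^sub>m k = transpose_mat V" using Vt by simp
  show ?thesis unfolding e1 r1 e2 a1 a2 a3 a4 ..
qed



lemma diagw_idx[simp]: "i < m \<Longrightarrow> j < m \<Longrightarrow> diagw m f $$ (i,j) = (if i = j then f i else 0)"
  unfolding diagw_def by auto

lemma diagw_dims[simp]: "dim_row (diagw m f) = m" "dim_col (diagw m f) = m"
  unfolding diagw_def by auto

lemma subm_dims[simp]: "dim_row (subm L A B) = length A" "dim_col (subm L A B) = length B"
  unfolding subm_def by auto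

theorem mainTheorem6:
  fixes L :: "real mat" and n :: nat and D :: "nat list" and w :: "nat \<Rightarrow> real"
    and r \<alpha> :: real and \<sigma> :: "nat list"
  assumes "psd_mat n L"
    and "set D \<subseteq> {..<n}"
    and "\<forall>j < length D. w j > 0"
    and "r \<ge> 1" and "\<alpha> > 0"
    and "set \<sigma> \<subseteq> {..<n}"
    and "\<forall>j < length \<sigma>. approx_marg L D w \<alpha> (\<sigma> ! j) > 0"
  shows "exp (d_eff (\<alpha> \<cdot>\<^sub>m Lhat L D w)) * det (1\<^sub>m (length \<sigma>) + \<alpha> \<cdot>\<^sub>m Ltilde L D w \<alpha> r \<sigma>)
         / (exp (real (length \<sigma>) / r) * det (1\<^sub>m (length D) + \<alpha> \<cdot>\<^sub>m Lhat L D w)) \<le> 1"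
proof -
  define m where "m = length D"
  define t where "t = length \<sigma>"
  define k where "k = m + t"
  define I where "I = D @ \<sigma>"
  have lenI: "length I = k" unfolding I_def k_def m_def t_def by simp
  have Lc: "L \<in> carrier_mat n n" using assms(1) unfolding psd_mat_def by auto
  have Iin: "I ! a < n" if "a < k" for a
  proof -
    have "I ! a \<in> set I" using that lenI by auto
    then show ?thesis using assms(2,6) unfolding I_def by auto
  qed
  have ID: "I ! i = D ! i" if "i < m" for i using that unfolding I_def m_def by (simp add: nth_append)
  have IS: "I ! (m + a) = \<sigma> ! a" if "a < t" for a using that unfolding I_def m_def by (simp add: nth_append)
  define P where "P = mat n k (\<lambda>(p,a). if I ! a = p then (1::real) else 0)"
  have Pc: "P \<in> carrier_mat n k" unfolding P_def by auto
  have Kpsd: "psd_mat k (transpose_mat P * L * P)" by (rule psd_congr[OF assms(1) Pc])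
  have Kidx: "(transpose_mat P * L * P) $$ (a,b) = L $$ (I!a, I!b)" if ab: "a < k" "b < k" for a b
  proof -
    have "(transpose_mat P * L * P) $$ (a,b) = (\<Sum>q<n. (\<Sum>p<n. transpose_mat P $$ (a,p) * L $$ (p,q)) * P $$ (q,b))"
      by (rule trip_idx[of _ k n _ n _ k]) (use Pc Lc ab in auto)
    also have "\<dots> = (\<Sum>q<n. L $$ (I!a, q) * P $$ (q,b))"
    proof (intro sum.cong refl)
      fix q assume q: "q \<in> {..<n}"
      have "(\<Sum>p<n. transpose_mat P $$ (a,p) * L $$ (p,q)) = (\<Sum>p<n. if p = I ! a then L $$ (p,q) else 0)"
        by (intro sum.cong refl) (use ab in \<open>auto simp: P_def\<close>)
      also have "\<dots> = L $$ (I!a, q)" using Iin[OF ab(1)] by simp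
      finally show "(\<Sum>p<n. transpose_mat P $$ (a,p) * L $$ (p,q)) * P $$ (q,b) = L $$ (I!a, q) * P $$ (q,b)" by simp
    qed
    also have "\<dots> = (\<Sum>q<n. if q = I ! b then L $$ (I!a, q) else 0)"
      by (intro sum.cong refl) (use ab in \<open>auto simp: P_def\<close>)
    also have "\<dots> = L $$ (I!a, I!b)" using Iin[OF ab(2)] by simp
    finally show ?thesis .
  qed
  obtain Z where Zc: "Z \<in> carrier_mat k k" and KZ: "transpose_mat P * L * P = transpose_mat Z * Z"
    using cholesky[OF Kpsd] by auto
  have ZZ: "(\<Sum>c<k. Z $$ (c,a) * Z $$ (c,b)) = L $$ (I!a, I!b)" if "a < k" "b < k" for a b
    using Kidx[OF that] tmult_idx[OF Zc that] KZ by simp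
  have wpos: "w j > 0" if "j < m" for j using assms(3) that unfolding m_def by auto
  define l where "l = (\<lambda>a. approx_marg L D w \<alpha> (\<sigma> ! a))"
  have lpos: "l a > 0" if "a < t" for a using assms(7) that unfolding l_def t_def by auto
  define sa where "sa = sqrt \<alpha>"
  define sq where "sq = sqrt (\<alpha> / r)"
  define sw where "sw = (\<lambda>j. sqrt (w j))"
  define sl where "sl = (\<lambda>a. sqrt (l a))"
  have ha: "sa * sa = \<alpha>" unfolding sa_def using assms(5) by simp
  have hw: "sw j * sw j = w j" "sw j > 0" if "j < m" for j unfolding sw_def using wpos[OF that] by auto
  have hl: "sl a * sl a = l a" "sl a > 0" if "a < t" for a unfolding sl_def using lpos[OF that] by auto
  have hr: "sq * sq = \<alpha> / r" unfolding sq_def using assms(4,5) by simp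
  define X where "X = mat k m (\<lambda>(c,j). sa * sw j * Z $$ (c,j))"
  define V where "V = mat k t (\<lambda>(c,a). sq / sl a * Z $$ (c, m + a))"
  have Xc: "X \<in> carrier_mat k m" unfolding X_def by auto
  have Vc: "V \<in> carrier_mat k t" unfolding V_def by auto
  have Lhc: "Lhat L D w \<in> carrier_mat m m" unfolding m_def by (rule Lhat_carrier)
  have XtX: "transpose_mat X * X = \<alpha> \<cdot>\<^sub>m Lhat L D w"
  proof (rule eq_matI)
    fix i j assume "i < dim_row (\<alpha> \<cdot>\<^sub>m Lhat L D w)" "j < dim_col (\<alpha> \<cdot>\<^sub>m Lhat L D w)"
    then have ij: "i < m" "j < m" using Lhc by auto
    have "(transpose_mat X * X) $$ (i,j) = (\<Sum>c<k. X $$ (c,i) * X $$ (c,j))" by (rule tmult_idx[OF Xc ij])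
    also have "\<dots> = (\<Sum>c<k. (sa * sa) * (sw i * sw j) * (Z $$ (c,i) * Z $$ (c,j)))"
      by (intro sum.cong refl) (use ij in \<open>auto simp: X_def algebra_simps\<close>)
    also have "\<dots> = \<alpha> * (sw i * sw j) * L $$ (D ! i, D ! j)"
      unfolding sum_distrib_left[symmetric] ha using ZZ[of i j] ij ID k_def by simp
    also have "\<dots> = (\<alpha> \<cdot>\<^sub>m Lhat L D w) $$ (i,j)"
      using ij Lhc by (simp add: Lhat_idx m_def sw_def)
    finally show "(transpose_mat X * X) $$ (i,j) = (\<alpha> \<cdot>\<^sub>m Lhat L D w) $$ (i,j)" .
  qed (use Xc Lhc in auto)
  have Ltc: "Ltilde L D w \<alpha> r \<sigma> \<in> carrier_mat t t" unfolding Ltilde_def t_def by auto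
  have VtV_idx: "(transpose_mat V * V) $$ (a,b) = (\<alpha> / r) / (sl a * sl b) * L $$ (\<sigma> ! a, \<sigma> ! b)"
    if ab: "a < t" "b < t" for a b
  proof -
    have "(transpose_mat V * V) $$ (a,b) = (\<Sum>c<k. V $$ (c,a) * V $$ (c,b))" by (rule tmult_idx[OF Vc ab])
    also have "\<dots> = (\<Sum>c<k. (sq * sq) / (sl a * sl b) * (Z $$ (c, m + a) * Z $$ (c, m + b)))"
      by (intro sum.cong refl) (use ab in \<open>auto simp: V_def algebra_simps\<close>)
    also have "\<dots> = (\<alpha> / r) / (sl a * sl b) * L $$ (\<sigma> ! a, \<sigma> ! b)"
      unfolding sum_distrib_left[symmetric] hr using ZZ[of "m + a" "m + b"] ab IS k_def by simp
    finally show ?thesis .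
  qed
  have VtV: "transpose_mat V * V = \<alpha> \<cdot>\<^sub>m Ltilde L D w \<alpha> r \<sigma>"
  proof (rule eq_matI)
    fix a b assume "a < dim_row (\<alpha> \<cdot>\<^sub>m Ltilde L D w \<alpha> r \<sigma>)" "b < dim_col (\<alpha> \<cdot>\<^sub>m Ltilde L D w \<alpha> r \<sigma>)"
    then have ab: "a < t" "b < t" using Ltc by auto
    show "(transpose_mat V * V) $$ (a,b) = (\<alpha> \<cdot>\<^sub>m Ltilde L D w \<alpha> r \<sigma>) $$ (a,b)"
      unfolding VtV_idx[OF ab] using ab assms(4) lpos[OF ab(1)] lpos[OF ab(2)]
      by (simp add: Ltilde_def t_def l_def sl_def real_sqrt_mult)
  qed (use Vc Ltc in auto)
  define Gi where "Gi = minv (\<alpha> \<cdot>\<^sub>m Lhat L D w + 1\<^sub>m m)"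
  have M1: "\<alpha> \<cdot>\<^sub>m Lhat L D w + 1\<^sub>m m = 1\<^sub>m m + transpose_mat X * X"
    unfolding XtX using Lhc by (simp add: comm_add_mat[of _ m m])
  have M1c: "1\<^sub>m m + transpose_mat X * X \<in> carrier_mat m m" using Xc by auto
  note mp = minv_props[OF M1c one_plus_det[OF Xc]]
  have Gic: "Gi \<in> carrier_mat m m" and GGi: "(1\<^sub>m m + transpose_mat X * X) * Gi = 1\<^sub>m m"
    unfolding Gi_def M1 using mp by auto
  note cr = core[OF Xc Vc Gic GGi]
  have deff: "d_eff (\<alpha> \<cdot>\<^sub>m Lhat L D w) = mtrace (transpose_mat X * X * Gi)"
  proof -
    have "dim_row (\<alpha> \<cdot>\<^sub>m Lhat L D w) = m" using Lhc by simp
    then show ?thesis unfolding d_eff_def Gi_def XtX by simp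
  qed
  define A2 where "A2 = \<alpha> \<cdot>\<^sub>m subm L D D + diagw m (\<lambda>j. 1 / w j)"
  define N where "N = mat m m (\<lambda>(p,q). sw p * Gi $$ (p,q) * sw q)"
  have A2c: "A2 \<in> carrier_mat m m" unfolding A2_def m_def by auto
  have Nc: "N \<in> carrier_mat m m" unfolding N_def by auto
  have Gentry: "(\<Sum>c<m. ((if i = c then 1 else 0) + \<alpha> * (sw i * L $$ (D!i, D!c) * sw c)) * Gi $$ (c,j))
      = (if i = j then 1 else 0)" if ij: "i < m" "j < m" for i j
  proof -
    have "((1\<^sub>m m + transpose_mat X * X) * Gi) $$ (i,j) = (\<Sum>c<m. (1\<^sub>m m + transpose_mat X * X) $$ (i,c) * Gi $$ (c,j))"
      by (rule mult_idx[OF M1c Gic ij])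
    also have "\<dots> = (\<Sum>c<m. ((if i = c then 1 else 0) + \<alpha> * (sw i * L $$ (D!i, D!c) * sw c)) * Gi $$ (c,j))"
      by (intro sum.cong refl) (use ij Lhc in \<open>auto simp: XtX Lhat_idx m_def sw_def\<close>)
    finally show ?thesis using GGi ij by simp
  qed
  have AN: "A2 * N = 1\<^sub>m m"
  proof (rule eq_matI)
    fix i j assume "i < dim_row (1\<^sub>m m :: real mat)" "j < dim_col (1\<^sub>m m :: real mat)"
    then have ij: "i < m" "j < m" by auto
    have "(A2 * N) $$ (i,j) = (\<Sum>c<m. A2 $$ (i,c) * N $$ (c,j))" by (rule mult_idx[OF A2c Nc ij])
    also have "\<dots> = (\<Sum>c<m. (sw j / sw i) * (((if i = c then 1 else 0) + \<alpha> * (sw i * L $$ (D!i, D!c) * sw c)) * Gi $$ (c,j)))"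
    proof (intro sum.cong refl)
      fix c assume "c \<in> {..<m}"
      then have c: "c < m" by auto
      have a2: "A2 $$ (i,c) = \<alpha> * L $$ (D!i, D!c) + (if i = c then 1 / w i else 0)"
        unfolding A2_def using ij c by (simp add: m_def)
      have n2: "N $$ (c,j) = sw c * Gi $$ (c,j) * sw j" unfolding N_def using ij c by simp
      have wi: "w i = sw i * sw i" using hw(1)[OF ij(1)] by simp
      have si: "sw i > 0" using hw(2)[OF ij(1)] .
      show "A2 $$ (i,c) * N $$ (c,j) = (sw j / sw i) * (((if i = c then 1 else 0) + \<alpha> * (sw i * L $$ (D!i, D!c) * sw c)) * Gi $$ (c,j))"
        unfolding a2 n2 wi using si by (cases "i = c") (simp_all add: field_simps)
    qed
    also have "\<dots> = (sw j / sw i) * (if i = j then 1 else 0)"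
      by (simp only: sum_distrib_left[symmetric] Gentry[OF ij])
    also have "\<dots> = (1\<^sub>m m :: real mat) $$ (i,j)" using ij hw(2)[OF ij(1)] by auto
    finally show "(A2 * N) $$ (i,j) = (1\<^sub>m m :: real mat) $$ (i,j)" .
  qed (use A2c Nc in auto)
  have G2: "minv A2 = N" by (rule minv_unique[OF A2c Nc AN])
  define Pm where "Pm = (\<lambda>a. (\<Sum>q<m. (\<Sum>p<m. L $$ (\<sigma> ! a, D ! p) * (sw p * Gi $$ (p,q) * sw q)) * L $$ (D ! q, \<sigma> ! a)))"
  have lPm: "l a = \<alpha> * (L $$ (\<sigma> ! a, \<sigma> ! a) - \<alpha> * Pm a)" if a: "a < t" for a
  proof -
    have "l a = \<alpha> * (L $$ (\<sigma> ! a, \<sigma> ! a) - \<alpha> * (subm L [\<sigma> ! a] D * N * subm L D [\<sigma> ! a]) $$ (0,0))"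
      unfolding l_def approx_marg_def using G2 unfolding A2_def m_def by simp
    also have "(subm L [\<sigma> ! a] D * N * subm L D [\<sigma> ! a]) $$ (0,0)
       = (\<Sum>q<m. (\<Sum>p<m. subm L [\<sigma> ! a] D $$ (0,p) * N $$ (p,q)) * subm L D [\<sigma> ! a] $$ (q,0))"
      by (rule trip_idx[of _ 1 m _ m _ 1]) (use Nc in \<open>auto simp: m_def\<close>)
    also have "\<dots> = Pm a" unfolding Pm_def
      by (intro sum.cong refl) (auto simp: N_def m_def)
    finally show ?thesis .
  qed
  have VtX_idx: "(transpose_mat V * X) $$ (a,p) = sq / sl a * (sa * sw p) * L $$ (\<sigma> ! a, D ! p)"
    if ap: "a < t" "p < m" for a p
  proof -
    have "(transpose_mat V * X) $$ (a,p) = (\<Sum>c<k. transpose_mat V $$ (a,c) * X $$ (c,p))"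
      by (rule mult_idx[of _ t k _ m]) (use Vc Xc ap in auto)
    also have "\<dots> = (\<Sum>c<k. sq / sl a * (sa * sw p) * (Z $$ (c, m + a) * Z $$ (c, p)))"
      by (intro sum.cong refl) (use ap Vc in \<open>auto simp: V_def X_def algebra_simps\<close>)
    also have "\<dots> = sq / sl a * (sa * sw p) * L $$ (\<sigma> ! a, D ! p)"
      unfolding sum_distrib_left[symmetric] using ZZ[of "m + a" p] ap IS ID k_def by simp
    finally show ?thesis .
  qed
  have XtV_idx: "(transpose_mat X * V) $$ (q,a) = (sa * sw q) * (sq / sl a) * L $$ (D ! q, \<sigma> ! a)"
    if qa: "q < m" "a < t" for q a
  proof -
    have "(transpose_mat X * V) $$ (q,a) = (\<Sum>c<k. transpose_mat X $$ (q,c) * V $$ (c,a))"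
      by (rule mult_idx[of _ m k _ t]) (use Vc Xc qa in auto)
    also have "\<dots> = (\<Sum>c<k. (sa * sw q) * (sq / sl a) * (Z $$ (c, q) * Z $$ (c, m + a)))"
      by (intro sum.cong refl) (use qa Xc in \<open>auto simp: V_def X_def algebra_simps\<close>)
    also have "\<dots> = (sa * sw q) * (sq / sl a) * L $$ (D ! q, \<sigma> ! a)"
      unfolding sum_distrib_left[symmetric] using ZZ[of q "m + a"] qa IS ID k_def by simp
    finally show ?thesis .
  qed
  define Q where "Q = (transpose_mat V * X) * Gi * (transpose_mat X * V)"
  have Qc: "Q \<in> carrier_mat t t" unfolding Q_def using Vc Xc Gic by auto
  have VtVc: "transpose_mat V * V \<in> carrier_mat t t" using Vc by auto
  have Qidx: "Q $$ (a,a) = (sq * sq) / (sl a * sl a) * (sa * sa) * Pm a" if a: "a < t" for a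
  proof -
    have "Q $$ (a,a) = (\<Sum>q<m. (\<Sum>p<m. (transpose_mat V * X) $$ (a,p) * Gi $$ (p,q)) * (transpose_mat X * V) $$ (q,a))"
      unfolding Q_def by (rule trip_idx[of _ t m _ m _ t]) (use Vc Xc Gic a in auto)
    also have "\<dots> = (\<Sum>q<m. (\<Sum>p<m. (sq * sq) / (sl a * sl a) * (sa * sa) *
        (L $$ (\<sigma> ! a, D ! p) * (sw p * Gi $$ (p,q) * sw q) * L $$ (D ! q, \<sigma> ! a))))"
      unfolding sum_distrib_right
      by (intro sum.cong refl) (use a in \<open>auto simp: VtX_idx XtV_idx field_simps\<close>)
    also have "\<dots> = (sq * sq) / (sl a * sl a) * (sa * sa) * Pm a"
      unfolding Pm_def sum_distrib_left sum_distrib_right by (simp add: mult_ac)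
    finally show ?thesis .
  qed
  have trV: "mtrace (transpose_mat V * (1\<^sub>m k - X * Gi * transpose_mat X) * V) = real t / r"
  proof -
    have "mtrace (transpose_mat V * (1\<^sub>m k - X * Gi * transpose_mat X) * V) = mtrace (transpose_mat V * V - Q)"
      unfolding Q_def sandwich[OF Vc Xc Gic] ..
    also have "\<dots> = (\<Sum>a<t. 1 / r)"
      unfolding mtrace_def
    proof -
      have "dim_row (transpose_mat V * V - Q) = t" using VtVc Qc by simp
      moreover have "(transpose_mat V * V - Q) $$ (a,a) = 1 / r" if a: "a < t" for a
      proof -
        have "(transpose_mat V * V - Q) $$ (a,a) = (transpose_mat V * V) $$ (a,a) - Q $$ (a,a)"
          using a VtVc Qc by simp
        also have "\<dots> = (\<alpha> / r) / (sl a * sl a) * L $$ (\<sigma> ! a, \<sigma> ! a) - (\<alpha> / r) / (sl a * sl a) * \<alpha> * Pm a"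
          unfolding VtV_idx[OF a a] Qidx[OF a] hr ha ..
        also have "\<dots> = (1 / r) * (\<alpha> * (L $$ (\<sigma> ! a, \<sigma> ! a) - \<alpha> * Pm a)) / l a"
          unfolding hl(1)[OF a] using lpos[OF a] assms(4) by (simp add: field_simps)
        also have "\<dots> = 1 / r" unfolding lPm[OF a, symmetric] using lpos[OF a] by simp
        finally show ?thesis .
      qed
      ultimately show "(\<Sum>i<dim_row (transpose_mat V * V - Q). (transpose_mat V * V - Q) $$ (i, i)) = (\<Sum>a<t. 1 / r)"
        by simp
    qed
    also have "\<dots> = real t / r" by simp
    finally show ?thesis .
  qed
  have fin: "det (1\<^sub>m t + \<alpha> \<cdot>\<^sub>m Ltilde L D w \<alpha> r \<sigma>) \<le> det (1\<^sub>m m + \<alpha> \<cdot>\<^sub>m Lhat L D w) *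
      exp (real t / r - d_eff (\<alpha> \<cdot>\<^sub>m Lhat L D w))"
    using cr(1) unfolding VtV XtX trV deff .
  have dpos: "det (1\<^sub>m m + \<alpha> \<cdot>\<^sub>m Lhat L D w) > 0" using cr(2) unfolding XtX .
  define E where "E = d_eff (\<alpha> \<cdot>\<^sub>m Lhat L D w)"
  define d1 where "d1 = det (1\<^sub>m t + \<alpha> \<cdot>\<^sub>m Ltilde L D w \<alpha> r \<sigma>)"
  define d2 where "d2 = det (1\<^sub>m m + \<alpha> \<cdot>\<^sub>m Lhat L D w)"
  have f2: "d1 \<le> d2 * (exp (real t / r) / exp E)"
    using fin unfolding E_def[symmetric] d1_def[symmetric] d2_def[symmetric] exp_diff .
  have "exp E * d1 \<le> exp (real t / r) * d2"
    using f2 by (simp add: field_simps)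
  moreover have "exp (real t / r) * d2 > 0" using dpos unfolding d2_def by simp
  ultimately have "exp E * d1 / (exp (real t / r) * d2) \<le> 1" by simp
  then show ?thesis unfolding E_def d1_def d2_def t_def m_def .
qed

end
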